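(* Let $X$ be an infinite compact metrizable space, $h\colon X\to X$ a minimal homeomorphism, and suppose $(X,h)$ has the topological small boundary property. Let $\varepsilon>0$. Then for any closed $F\subset X$ and open $U\subset X$ with $F\subset U$, there exist a closed set $K\subset X$ and an open set $V\subset X$ with $F\subset K\subset V\subset\overline{V}\subset U$ and $\mu(V\setminus K)<\varepsilon$ for all $\mu\in M_h(X)$.
   Context: $M_h(X)$ denotes the set of $h$-invariant Borel probability measures on $X$. A closed set $F\subset X$ is topologically $h$-small if there is $m\in\mathbb{Z}_{+}$ such that whenever $d(0),\dots,d(m)$ are $m+1$ distinct integers, $h^{d(0)}(F)\cap\cdots\cap h^{d(m)}(F)=\varnothing$. $(X,h)$ has the topological small boundary property if whenever $F,K\subset X$ are disjoint compact sets, there exist open sets $U,V\subset X$ with $F\subset U$, $K\subset V$, $\overline{U}\cap\overline{V}=\varnothing$ and $\partial U$ (boundary of $U$) topologically $h$-small. *)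

theory Defs
  imports "HOL-Probability.Probability"
begin

definition zpow :: "('a \<Rightarrow> 'a) \<Rightarrow> int \<Rightarrow> 'a \<Rightarrow> 'a" where
  "zpow h n = (if 0 \<le> n then h ^^ nat n else inv h ^^ nat (- n))"

definition is_homeo :: "('a::topological_space \<Rightarrow> 'a) \<Rightarrow> bool" where
  "is_homeo h \<longleftrightarrow> (\<exists>g. homeomorphism UNIV UNIV h g)"

definition minimal_homeo :: "('a::topological_space \<Rightarrow> 'a) \<Rightarrow> bool" where
  "minimal_homeo h \<longleftrightarrow> is_homeo h \<and>
     (\<forall>C. closed C \<and> h ` C = C \<longrightarrow> C = {} \<or> C = UNIV)"

definition inv_measures :: "('a::topological_space \<Rightarrow> 'a) \<Rightarrow> 'a measure set" where
  "inv_measures h = {\<mu>. prob_space \<mu> \<and> sets \<mu> = sets borel \<and>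
      (\<forall>A\<in>sets borel. emeasure \<mu> (h -` A) = emeasure \<mu> A)}"

definition top_small :: "('a::topological_space \<Rightarrow> 'a) \<Rightarrow> 'a set \<Rightarrow> bool" where
  "top_small h F \<longleftrightarrow> closed F \<and> (\<exists>m::nat. \<forall>d::nat \<Rightarrow> int. inj_on d {0..m} \<longrightarrow>
      (\<Inter>i\<in>{0..m}. zpow h (d i) ` F) = {})"

definition top_small_boundary_property :: "('a::topological_space \<Rightarrow> 'a) \<Rightarrow> bool" where
  "top_small_boundary_property h \<longleftrightarrow>
     (\<forall>F K. compact F \<and> compact K \<and> F \<inter> K = {} \<longrightarrow>
        (\<exists>U V. open U \<and> open V \<and> F \<subseteq> U \<and> K \<subseteq> V \<and> closure U \<inter> closure V = {}
               \<and> top_small h (frontier U)))"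

end

theory Submission
  imports Defs
begin

lemma funpow_inv_both:
  assumes "bij h"
  shows "(h^^k) ((inv h ^^ k) y) = y \<and> (inv h ^^ k) ((h^^k) y) = y"
proof (induction k arbitrary: y)
  case 0 then show ?case by simp
next
  case (Suc k)
  have a: "h (inv h z) = z" for z using assms by (simp add: bij_def surj_f_inv_f)
  have b: "inv h (h z) = z" for z using assms by (simp add: bij_def inv_f_f)
  have 1: "(h^^Suc k) ((inv h ^^ Suc k) y) = y"
    by (simp only: funpow_Suc_right[where f=h] funpow.simps(2)[where f="inv h"] comp_apply a Suc)
  have 2: "(inv h ^^ Suc k) ((h^^Suc k) y) = y"
    by (simp only: funpow_Suc_right[where f="inv h"] funpow.simps(2)[where f=h] comp_apply b Suc)
  show ?case using 1 2 by simp
qed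

lemma zpow_neg: "zpow h (- int k) = inv h ^^ k"
  unfolding zpow_def by (cases "k = 0") auto

lemma small_no_common:
  assumes "top_small h E" "bij h"
  obtains m where "\<And>S x. finite S \<Longrightarrow> card S = Suc m \<Longrightarrow> \<not>(\<forall>j\<in>S. (h^^j) x \<in> E)"
proof -
  from assms(1) obtain m where m: "\<forall>d::nat \<Rightarrow> int. inj_on d {0..m} \<longrightarrow>
      (\<Inter>i\<in>{0..m}. zpow h (d i) ` E) = {}" unfolding top_small_def by blast
  have "\<not>(\<forall>j\<in>S. (h^^j) x \<in> E)" if fin: "finite S" and cS: "card S = Suc m" for S x
  proof
    assume all: "\<forall>j\<in>S. (h^^j) x \<in> E"
    obtain f where f: "bij_betw f {0..<card S} S" using ex_bij_betw_nat_finite[OF fin] by blast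
    have fs: "{0..<card S} = {0..m}" using cS by auto
    define d where "d i = - int (f i)" for i
    have "inj_on d {0..m}" using f fs unfolding d_def bij_betw_def inj_on_def by auto
    hence e: "(\<Inter>i\<in>{0..m}. zpow h (d i) ` E) = {}" using m by blast
    have "x \<in> (\<Inter>i\<in>{0..m}. zpow h (d i) ` E)"
    proof
      fix i assume i: "i \<in> {0..m}"
      hence "f i \<in> S" using f fs unfolding bij_betw_def by auto
      hence "(h^^f i) x \<in> E" using all by blast
      moreover have "x = (inv h ^^ f i) ((h^^f i) x)" using funpow_inv_both[OF assms(2)] by simp
      ultimately show "x \<in> zpow h (d i) ` E" unfolding d_def zpow_neg by blast
    qed
    with e show False by blast
  qed
  then show ?thesis using that by blast
qed

lemma cont_funpow:
  fixes h :: "'a::topological_space \<Rightarrow> 'a"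
  assumes "continuous_on UNIV h"
  shows "continuous_on UNIV (h^^j)"
proof (induction j)
  case 0
  have "h^^0 = (\<lambda>x. x)" by (simp add: fun_eq_iff)
  then show ?case by (simp add: continuous_on_id)
next
  case (Suc j)
  have "continuous_on UNIV (h \<circ> h^^j)"
    by (rule continuous_on_compose[OF Suc]) (rule continuous_on_subset[OF assms], simp)
  then show ?case by simp
qed

lemma nbhd:
  fixes h :: "'a::metric_space \<Rightarrow> 'a"
  assumes "compact (UNIV :: 'a set)" "continuous_on UNIV h" "closed E"
    and nc: "\<And>S x. finite S \<Longrightarrow> card S = Suc m \<Longrightarrow> \<not>(\<forall>j\<in>S. (h^^j) x \<in> E)"
  shows "\<exists>Ob. open Ob \<and> E \<subseteq> Ob \<and> (\<forall>x. card {j\<in>{..<L}. (h^^j) x \<in> Ob} \<le> m)"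
proof (cases "E = {}")
  case True then show ?thesis by (intro exI[of _ "{}"]) auto
next
  case Ene: False
  define SS where "SS = {S. S \<subseteq> {..<L} \<and> card S = Suc m}"
  have finSS: "finite SS" unfolding SS_def by simp
  define g where "g S x = (\<Sum>j\<in>S. infdist ((h^^j) x) E)" for S x
  have "\<exists>\<delta>>0. \<forall>x. \<delta> \<le> g S x" if "S \<in> SS" for S
  proof -
    have fS: "finite S" using that unfolding SS_def by (auto intro: finite_subset)
    have "continuous_on UNIV (g S)" unfolding g_def
      by (intro continuous_on_sum continuous_on_infdist cont_funpow assms(2))
    then obtain x0 where x0: "\<forall>y. g S x0 \<le> g S y"
      using continuous_attains_inf[OF assms(1)] by blast
    have "g S x0 > 0"
    proof (rule ccontr)
      assume "\<not> g S x0 > 0"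
      hence "g S x0 = 0" unfolding g_def using sum_nonneg[of S "\<lambda>j. infdist ((h^^j) x0) E"]
        by (simp add: infdist_nonneg)
      hence "\<forall>j\<in>S. infdist ((h^^j) x0) E = 0" unfolding g_def
        by (simp add: sum_nonneg_eq_0_iff[OF fS] infdist_nonneg)
      hence "\<forall>j\<in>S. (h^^j) x0 \<in> E" using in_closed_iff_infdist_zero[OF assms(3) Ene] by blast
      thus False using nc fS that unfolding SS_def by blast
    qed
    thus ?thesis using x0 by blast
  qed
  then obtain df where df: "\<forall>S\<in>SS. df S > 0 \<and> (\<forall>x. df S \<le> g S x)" by metis
  define \<delta> where "\<delta> = Min (insert 1 (df ` SS))"
  have dpos: "\<delta> > 0" unfolding \<delta>_def using finSS df by auto
  have dle: "\<delta> \<le> df S" if "S \<in> SS" for S unfolding \<delta>_def using finSS that by auto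
  define Ob where "Ob = {x. infdist x E < \<delta> / real (Suc m)}"
  have "open Ob" unfolding Ob_def
    by (intro open_Collect_less continuous_on_infdist continuous_on_id continuous_on_const)
  moreover have "E \<subseteq> Ob" unfolding Ob_def using dpos by auto
  moreover have "card {j\<in>{..<L}. (h^^j) x \<in> Ob} \<le> m" for x
  proof (rule ccontr)
    assume "\<not> ?thesis"
    then obtain S where S: "S \<subseteq> {j\<in>{..<L}. (h^^j) x \<in> Ob}" "card S = Suc m" "finite S"
      using obtain_subset_with_card_n[of "Suc m" "{j\<in>{..<L}. (h^^j) x \<in> Ob}"] by force
    have SS: "S \<in> SS" using S unfolding SS_def by auto
    have Sne: "S \<noteq> {}" using S by auto
    have "g S x < (\<Sum>j\<in>S. \<delta> / real (Suc m))" unfolding g_def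
      by (rule sum_strict_mono[OF S(3) Sne]) (use S in \<open>auto simp: Ob_def\<close>)
    also have "\<dots> = \<delta>" using S(2) by simp
    also have "\<dots> \<le> g S x" using dle[OF SS] df SS by (meson order_trans)
    finally show False by simp
  qed
  ultimately show ?thesis by blast
qed

lemma measure_bound:
  fixes h :: "'a::metric_space \<Rightarrow> 'a"
  assumes mu: "\<mu> \<in> inv_measures h" and hc: "continuous_on UNIV h" and "open Ob"
    and cnt: "\<And>x. card {j\<in>{..<L}. (h^^j) x \<in> Ob} \<le> m"
  shows "real L * measure \<mu> Ob \<le> real m"
proof -
  have ps: "prob_space \<mu>" and sets: "sets \<mu> = sets borel"
    and inv: "\<And>A. A \<in> sets borel \<Longrightarrow> emeasure \<mu> (h -` A) = emeasure \<mu> A"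
    using mu unfolding inv_measures_def by auto
  interpret prob_space \<mu> by (rule ps)
  have opn: "open ((h^^j) -` Ob)" for j
    using cont_funpow[OF hc, of j] \<open>open Ob\<close> by (simp add: continuous_on_open_vimage)
  have inS: "(h^^j) -` Ob \<in> sets \<mu>" for j using opn[of j] sets by simp
  have eq: "measure \<mu> ((h^^j) -` Ob) = measure \<mu> Ob" for j
  proof (induction j)
    case 0 then show ?case by simp
  next
    case (Suc j)
    have e1: "(h^^Suc j) -` Ob = h -` ((h^^j) -` Ob)" by (simp only: funpow_Suc_right[where f=h] vimage_comp)
    have "measure \<mu> (h -` ((h^^j) -` Ob)) = measure \<mu> ((h^^j) -` Ob)"
      unfolding measure_def using inv[of "(h^^j) -` Ob"] opn[of j] by simp
    then show ?case unfolding e1 using Suc.IH by (rule trans)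
  qed
  have sp: "space \<mu> = UNIV" by (simp add: sets_eq_imp_space_eq[OF sets])
  have "real L * measure \<mu> Ob = (\<Sum>j<L. measure \<mu> ((h^^j) -` Ob))" using eq by simp
  also have "\<dots> = (\<Sum>j<L. integral\<^sup>L \<mu> (indicator ((h^^j) -` Ob)))" using sp by simp
  also have "\<dots> = integral\<^sup>L \<mu> (\<lambda>x. \<Sum>j<L. indicator ((h^^j) -` Ob) x)"
    by (rule Bochner_Integration.integral_sum[where f="\<lambda>j. indicator ((h^^j) -` Ob)", symmetric]) (auto simp: integrable_indicator_iff sp inS less_top[symmetric])
  also have "\<dots> \<le> integral\<^sup>L \<mu> (\<lambda>x. real m)"
  proof (rule integral_mono)
    show "integrable \<mu> (\<lambda>x. \<Sum>j<L. indicator ((h^^j) -` Ob) x :: real)"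
      by (auto simp: integrable_indicator_iff sp inS less_top[symmetric])
    show "integrable \<mu> (\<lambda>x. real m)" by simp
    fix x
    have "(\<Sum>j<L. indicator ((h^^j) -` Ob) x :: real) = real (card {j\<in>{..<L}. (h^^j) x \<in> Ob})"
      by (simp add: indicator_def sum.If_cases Int_def)
    also have "\<dots> \<le> real m" using cnt by simp
    finally show "(\<Sum>j<L. indicator ((h^^j) -` Ob) x :: real) \<le> real m" .
  qed
  also have "\<dots> = real m" using prob_space by simp
  finally show ?thesis .
qed

theorem lemma4p8:
  fixes h :: "'a::metric_space \<Rightarrow> 'a" and \<epsilon> :: real
    and F U :: "'a set"
  assumes "compact (UNIV :: 'a set)" and "infinite (UNIV :: 'a set)"
    and "minimal_homeo h" and "top_small_boundary_property h"
    and "\<epsilon> > 0"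
    and "closed F" and "open U" and "F \<subseteq> U"
  shows "\<exists>K V. closed K \<and> open V \<and> F \<subseteq> K \<and> K \<subseteq> V \<and> closure V \<subseteq> U \<and>
           (\<forall>\<mu>\<in>inv_measures h. measure \<mu> (V - K) < \<epsilon>)"
proof -
  obtain g where hom: "homeomorphism UNIV UNIV h g"
    using assms(3) unfolding minimal_homeo_def is_homeo_def by blast
  have hc: "continuous_on UNIV h" using hom by (simp add: homeomorphism_def)
  have bh: "bij h" using hom unfolding homeomorphism_def bij_def inj_on_def surj_def
    by (metis UNIV_I)
  have cF: "compact F" using compact_Int_closed[OF assms(1) assms(6)] by simp
  have cU: "compact (- U)" using compact_Int_closed[OF assms(1), of "- U"] assms(7) by auto
  have "\<exists>W V'. open W \<and> open V' \<and> F \<subseteq> W \<and> - U \<subseteq> V' \<and>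
      closure W \<inter> closure V' = {} \<and> top_small h (frontier W)"
    by (rule assms(4)[unfolded top_small_boundary_property_def, rule_format])
       (use cF cU assms(8) in auto)
  then obtain W V' where W: "open W" "open V'" "F \<subseteq> W" "- U \<subseteq> V'"
      "closure W \<inter> closure V' = {}" "top_small h (frontier W)"
    by blast
  have clWU: "closure W \<subseteq> U" using W(4,5) closure_subset[of V'] by blast
  obtain m where nc: "\<And>S x. finite S \<Longrightarrow> card S = Suc m \<Longrightarrow> \<not>(\<forall>j\<in>S. (h^^j) x \<in> frontier W)"
    using small_no_common[OF W(6) bh] by blast
  define L where "L = nat (ceiling (real m / \<epsilon>)) + 1"
  have Lpos: "real L > 0" unfolding L_def by simp
  have mL: "real m / real L < \<epsilon>"
  proof -
    have "real m / \<epsilon> < real L" unfolding L_def by linarith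
    hence "real m < \<epsilon> * real L" using assms(5) by (simp add: divide_less_eq mult.commute)
    thus ?thesis using Lpos by (simp add: divide_less_eq mult.commute)
  qed
  obtain Ob where Ob0: "open Ob \<and> frontier W \<subseteq> Ob \<and> (\<forall>x. card {j\<in>{..<L}. (h^^j) x \<in> Ob} \<le> m)"
    using nbhd[OF assms(1) hc frontier_closed nc, where L=L] by (rule exE)
  have Ob: "open Ob" "frontier W \<subseteq> Ob" "\<And>x. card {j\<in>{..<L}. (h^^j) x \<in> Ob} \<le> m"
    using Ob0 by simp_all
  have "normal_space (euclidean :: 'a topology)"
    by (rule metrizable_imp_normal_space[OF metrizable_space_euclidean])
  hence "\<exists>V. open V \<and> closure W \<subseteq> V \<and> closure V \<subseteq> U"
    using clWU assms(7) unfolding normal_space_alt by simp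
  then obtain U1 where U1: "open U1" "closure W \<subseteq> U1" "closure U1 \<subseteq> U"
    by blast
  define V where "V = U1 \<inter> (W \<union> Ob)"
  have k1: "closed (closure W)" by simp
  have k2: "open V" unfolding V_def using U1(1) W(1) Ob(1) by auto
  have k3: "F \<subseteq> closure W" using W(3) closure_subset by blast
  have k4: "closure W \<subseteq> V" unfolding V_def using U1(2) Ob(2) closure_Un_frontier[of W] by auto
  have k5: "closure V \<subseteq> U" unfolding V_def using U1(3) closure_mono[of "U1 \<inter> (W \<union> Ob)" U1] by auto
  have k6: "measure \<mu> (V - closure W) < \<epsilon>" if mu: "\<mu> \<in> inv_measures h" for \<mu>
  proof -
    have ps: "prob_space \<mu>" and sets: "sets \<mu> = sets borel"
      using mu unfolding inv_measures_def by auto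
    interpret prob_space \<mu> by (rule ps)
    have "measure \<mu> (V - closure W) \<le> measure \<mu> Ob"
      by (rule finite_measure_mono) (use Ob(1) sets closure_subset in \<open>auto simp: V_def\<close>)
    also have "\<dots> \<le> real m / real L"
      using measure_bound[OF mu hc Ob(1) Ob(3)] Lpos by (simp add: le_divide_eq mult.commute)
    finally show ?thesis using mL by simp
  qed
  show ?thesis
    by (intro exI[of _ "closure W"] exI[of _ V] conjI ballI k1 k2 k3 k4 k5 k6)
qed

end
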